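(* Let $\mathcal G=\langle V=V_{\mathrm{Min}}\uplus V_{\mathrm{Max}}, V_T, A, E, \omega\rangle$ be a finite weighted game and $c\colon V_T\to\mathbb Z$. Assume that the subgraph induced by $V\setminus V_T$ is strongly connected, that every cycle all of whose vertices lie in $V\setminus V_T$ has negative weight, and that no vertex has value $+\infty$ or $-\infty$ (with respect to $c$). Let $n=|V\setminus V_T|$. Define $\vec x^0$ by $\vec x^0_v=c(v)$ for $v\in V_T$ and $\vec x^0_v=-\infty$ for $v\in V\setminus V_T$, and $\vec x^i=F(\vec x^{i-1})$ for $i>0$. Then $\vec x^{n+k}=\vec x^n$ for all $k\ge 0$.
   Context: A weighted game has vertices $V$ partitioned into vertices of Min and of Max, targets $V_T\subseteq V_{\mathrm{Min}}$, alphabet $A$, edges $E\subseteq V\times A\times V$, weights $\omega\colon E\to\mathbb Z$, and is deadlock-free and deterministic. A cycle is a finite sequence of consecutive edges starting and ending at the same vertex (length $\ge1$); its weight is the sum of its edge weights. With target values $c$, the weight of a play is $+\infty$ if it never visits $V_T$, and otherwise the sum of its edge weights up to the first visit of some $t\in V_T$ plus $c(t)$; the value of $v$ is $\inf_{\sigma_{\mathrm{Min}}}\sup_{\sigma_{\mathrm{Max}}}$ (equal to $\sup_{\sigma_{\mathrm{Max}}}\inf_{\sigma_{\mathrm{Min}}}$) of the weight of the outcome from $v$, strategies choosing an outgoing edge after each finite play ending in a vertex of the player. The operator $F$ on $(\mathbb Z\cup\{-\infty,+\infty\})^V$ is $F(\vec x)_v=c(v)$ if $v\in V_T$, $F(\vec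 x)_v=\min_{e=(v,a,v')\in E}\omega(e)+\vec x_{v'}$ if $v\in V_{\mathrm{Min}}\setminus V_T$, and $F(\vec x)_v=\max_{e=(v,a,v')\in E}\omega(e)+\vec x_{v'}$ if $v\in V_{\mathrm{Max}}$. *)

theory Defs
  imports "HOL-Analysis.Analysis"
begin

definition src :: "'v \<times> 'a \<times> 'v \<Rightarrow> 'v" where "src e = fst e"
definition tgt :: "'v \<times> 'a \<times> 'v \<Rightarrow> 'v" where "tgt e = snd (snd e)"

definition weighted_game ::
  "'v set \<Rightarrow> 'v set \<Rightarrow> 'v set \<Rightarrow> 'v set \<Rightarrow> 'a set \<Rightarrow> ('v \<times> 'a \<times> 'v) set \<Rightarrow> bool" where
  "weighted_game V VMin VMax VT A E \<longleftrightarrow>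
     finite V \<and> finite A \<and>
     V = VMin \<union> VMax \<and> VMin \<inter> VMax = {} \<and> VT \<subseteq> VMin \<and>
     E \<subseteq> V \<times> A \<times> V \<and>
     (\<forall>v\<in>V. \<exists>e\<in>E. src e = v) \<and>
     (\<forall>v a w w'. (v, a, w) \<in> E \<longrightarrow> (v, a, w') \<in> E \<longrightarrow> w = w')"

definition is_cycle :: "('v \<times> 'a \<times> 'v) set \<Rightarrow> ('v \<times> 'a \<times> 'v) list \<Rightarrow> bool" where
  "is_cycle E cyc \<longleftrightarrow> cyc \<noteq> [] \<and> set cyc \<subseteq> E \<and>
     (\<forall>i. Suc i < length cyc \<longrightarrow> tgt (cyc ! i) = src (cyc ! Suc i)) \<and>
     tgt (last cyc) = src (hd cyc)"

definition cycle_vertices :: "('v \<times> 'a \<times> 'v) list \<Rightarrow> 'v set" where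
  "cycle_vertices cyc = src ` set cyc \<union> tgt ` set cyc"

definition cycle_weight :: "('v \<times> 'a \<times> 'v \<Rightarrow> int) \<Rightarrow> ('v \<times> 'a \<times> 'v) list \<Rightarrow> int" where
  "cycle_weight \<omega> cyc = sum_list (map \<omega> cyc)"

definition induced_rel :: "('v \<times> 'a \<times> 'v) set \<Rightarrow> 'v set \<Rightarrow> ('v \<times> 'v) set" where
  "induced_rel E U = {(u, w). \<exists>a. (u, a, w) \<in> E \<and> u \<in> U \<and> w \<in> U}"

definition strongly_connected_on :: "('v \<times> 'a \<times> 'v) set \<Rightarrow> 'v set \<Rightarrow> bool" where
  "strongly_connected_on E U \<longleftrightarrow> (\<forall>u\<in>U. \<forall>w\<in>U. (u, w) \<in> (induced_rel E U)\<^sup>*)"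

text \<open>Finite plays (histories) are a start vertex with a list of edges; strategies map a
  history (start vertex, edges so far) to the next edge.\<close>
definition last_vertex :: "'v \<Rightarrow> ('v \<times> 'a \<times> 'v) list \<Rightarrow> 'v" where
  "last_vertex v h = (if h = [] then v else tgt (last h))"

type_synonym ('v, 'a) strategy = "'v \<Rightarrow> ('v \<times> 'a \<times> 'v) list \<Rightarrow> 'v \<times> 'a \<times> 'v"

definition strategies :: "('v \<times> 'a \<times> 'v) set \<Rightarrow> 'v set \<Rightarrow> ('v, 'a) strategy set" where
  "strategies E P = {\<sigma>. \<forall>v h. last_vertex v h \<in> P \<longrightarrow>
      \<sigma> v h \<in> E \<and> src (\<sigma> v h) = last_vertex v h}"

primrec outcome_prefix ::
  "'v set \<Rightarrow> ('v, 'a) strategy \<Rightarrow> ('v, 'a) strategy \<Rightarrow> 'v \<Rightarrow> nat \<Rightarrow> ('v \<times> 'a \<times> 'v) list" where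
  "outcome_prefix VMin \<sigma>Min \<sigma>Max v 0 = []"
| "outcome_prefix VMin \<sigma>Min \<sigma>Max v (Suc n) =
     (let h = outcome_prefix VMin \<sigma>Min \<sigma>Max v n in
      h @ [if last_vertex v h \<in> VMin then \<sigma>Min v h else \<sigma>Max v h])"

definition play_weight ::
  "'v set \<Rightarrow> 'v set \<Rightarrow> ('v \<times> 'a \<times> 'v \<Rightarrow> int) \<Rightarrow> ('v \<Rightarrow> int) \<Rightarrow>
   ('v, 'a) strategy \<Rightarrow> ('v, 'a) strategy \<Rightarrow> 'v \<Rightarrow> ereal" where
  "play_weight VMin VT \<omega> c \<sigma>Min \<sigma>Max v =
    (let p = outcome_prefix VMin \<sigma>Min \<sigma>Max v in
     if \<exists>n. last_vertex v (p n) \<in> VT then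
       (let n = (LEAST n. last_vertex v (p n) \<in> VT) in
        ereal (real_of_int (sum_list (map \<omega> (p n)) + c (last_vertex v (p n)))))
     else \<infinity>)"

definition game_value ::
  "'v set \<Rightarrow> 'v set \<Rightarrow> 'v set \<Rightarrow> ('v \<times> 'a \<times> 'v) set \<Rightarrow> ('v \<times> 'a \<times> 'v \<Rightarrow> int) \<Rightarrow>
   ('v \<Rightarrow> int) \<Rightarrow> 'v \<Rightarrow> ereal" where
  "game_value VMin VMax VT E \<omega> c v =
    (INF \<sigma>Min\<in>strategies E VMin. SUP \<sigma>Max\<in>strategies E VMax.
       play_weight VMin VT \<omega> c \<sigma>Min \<sigma>Max v)"

text \<open>The operator F (meaningful on vertices of V).\<close>
definition F_op ::
  "'v set \<Rightarrow> 'v set \<Rightarrow> ('v \<times> 'a \<times> 'v) set \<Rightarrow> ('v \<times> 'a \<times> 'v \<Rightarrow> int) \<Rightarrow> ('v \<Rightarrow> int) \<Rightarrow>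
   ('v \<Rightarrow> ereal) \<Rightarrow> ('v \<Rightarrow> ereal)" where
  "F_op VMin VT E \<omega> c x = (\<lambda>v.
     if v \<in> VT then ereal (real_of_int (c v))
     else if v \<in> VMin then Min {ereal (real_of_int (\<omega> e)) + x (tgt e) | e. e \<in> E \<and> src e = v}
     else Max {ereal (real_of_int (\<omega> e)) + x (tgt e) | e. e \<in> E \<and> src e = v})"

definition x_init :: "'v set \<Rightarrow> ('v \<Rightarrow> int) \<Rightarrow> 'v \<Rightarrow> ereal" where
  "x_init VT c = (\<lambda>v. if v \<in> VT then ereal (real_of_int (c v)) else -\<infinity>)"

end

theory Submission
  imports Defs
begin

definition Xit where
  "Xit VMin VT E \<omega> c i = (F_op VMin VT E \<omega> c ^^ i) (x_init VT c)"

lemma memS: "e \<in> E \<Longrightarrow> src e = v \<Longrightarrow> f e \<in> {f e | e. e \<in> E \<and> src e = v}"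
  by (rule CollectI, rule exI[of _ e]) simp

lemma Xit_Suc: "Xit VMin VT E \<omega> c (Suc i) = F_op VMin VT E \<omega> c (Xit VMin VT E \<omega> c i)"
  by (simp add: Xit_def)

context
  fixes V VMin VMax VT :: "'v set" and A :: "'a set" and E :: "('v \<times> 'a \<times> 'v) set"
    and \<omega> :: "'v \<times> 'a \<times> 'v \<Rightarrow> int" and c :: "'v \<Rightarrow> int"
  assumes game: "weighted_game V VMin VMax VT A E"
begin

lemma gE: "E \<subseteq> V \<times> A \<times> V"
  using game unfolding weighted_game_def by (elim conjE) assumption

lemma gV: "finite V"
  using game unfolding weighted_game_def by (elim conjE) assumption

lemma gA: "finite A"
  using game unfolding weighted_game_def by (elim conjE) assumption

lemma gdl: "\<forall>v\<in>V. \<exists>e\<in>E. src e = v"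
  using game unfolding weighted_game_def by (elim conjE) assumption

lemma gVT: "VT \<subseteq> VMin"
  using game unfolding weighted_game_def by (elim conjE) assumption

lemma finE: "finite E"
proof -
  have "finite (V \<times> A \<times> V)" using gV gA by simp
  from finite_subset[OF gE this] show ?thesis .
qed

lemma tgtV: "e \<in> E \<Longrightarrow> tgt e \<in> V"
proof -
  assume "e \<in> E"
  then have "e \<in> V \<times> A \<times> V" by (rule subsetD[OF gE])
  then show ?thesis unfolding tgt_def by (cases e) simp
qed

lemma S_fin: "finite {ereal (real_of_int (\<omega> e)) + x (tgt e) | e. e \<in> E \<and> src e = v}"
proof -
  have "{e. e \<in> E \<and> src e = v} \<subseteq> E" by blast
  then have "finite {e. e \<in> E \<and> src e = v}" using finE by (rule finite_subset)
  then have "finite ((\<lambda>e. ereal (real_of_int (\<omega> e)) + x (tgt e)) ` {e. e \<in> E \<and> src e = v})"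
    by (rule finite_imageI)
  then show ?thesis unfolding setcompr_eq_image .
qed

lemma dl: "v \<in> V \<Longrightarrow> \<exists>e\<in>E. src e = v"
  using gdl by (rule bspec)

lemma S_ne: "v \<in> V \<Longrightarrow> {ereal (real_of_int (\<omega> e)) + x (tgt e) | e. e \<in> E \<and> src e = v} \<noteq> {}"
proof -
  assume vV: "v \<in> V"
  from dl[OF vV] obtain e where e: "e \<in> E" "src e = v" ..
  show ?thesis by (rule ex_in_conv[THEN iffD1, OF exI, OF memS[OF e]])
qed

lemma F_cong:
  assumes "\<forall>u\<in>V. x u = y u"
  shows "F_op VMin VT E \<omega> c x v = F_op VMin VT E \<omega> c y v"
proof -
  have "{ereal (real_of_int (\<omega> e)) + x (tgt e) | e. e \<in> E \<and> src e = v}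
      = {ereal (real_of_int (\<omega> e)) + y (tgt e) | e. e \<in> E \<and> src e = v}"
    using assms tgtV by force
  then show ?thesis unfolding F_op_def by simp
qed

lemma F_mono:
  assumes "\<forall>u\<in>V. x u \<le> y u" "v \<in> V"
  shows "F_op VMin VT E \<omega> c x v \<le> F_op VMin VT E \<omega> c y v"
proof -
  let ?Sx = "{ereal (real_of_int (\<omega> e)) + x (tgt e) | e. e \<in> E \<and> src e = v}"
  let ?Sy = "{ereal (real_of_int (\<omega> e)) + y (tgt e) | e. e \<in> E \<and> src e = v}"
  have fx: "finite ?Sx" and fy: "finite ?Sy" by (rule S_fin)+
  have nx: "?Sx \<noteq> {}" and ny: "?Sy \<noteq> {}" using S_ne assms(2) by auto
  have le: "ereal (real_of_int (\<omega> e)) + x (tgt e) \<le> ereal (real_of_int (\<omega> e)) + y (tgt e)"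
    if "e \<in> E" for e using assms(1) tgtV[OF that] by (simp add: add_left_mono)
  have "Min ?Sx \<le> Min ?Sy"
  proof -
    have "Min ?Sy \<in> ?Sy" using fy ny by (rule Min_in)
    then obtain e where e: "e \<in> E" "src e = v" "Min ?Sy = ereal (real_of_int (\<omega> e)) + y (tgt e)" by auto
    have "Min ?Sx \<le> ereal (real_of_int (\<omega> e)) + x (tgt e)" using Min_le[OF fx memS[OF e(1,2)]] .
    then show ?thesis using le[OF e(1)] e(3) by simp
  qed
  moreover have "Max ?Sx \<le> Max ?Sy"
  proof -
    have "Max ?Sx \<in> ?Sx" using fx nx by (rule Max_in)
    then obtain e where e: "e \<in> E" "src e = v" "Max ?Sx = ereal (real_of_int (\<omega> e)) + x (tgt e)" by auto
    have "ereal (real_of_int (\<omega> e)) + y (tgt e) \<le> Max ?Sy" using Max_ge[OF fy memS[OF e(1,2)]] .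
    then show ?thesis using le[OF e(1)] e(3) by simp
  qed
  ultimately show ?thesis unfolding F_op_def by simp
qed

lemma X_VT: "v \<in> VT \<Longrightarrow> Xit VMin VT E \<omega> c i v = ereal (real_of_int (c v))"
  by (cases i) (simp_all add: Xit_def x_init_def F_op_def)

lemma X_fin: "v \<in> V \<Longrightarrow> Xit VMin VT E \<omega> c i v \<noteq> \<infinity>"
proof (induction i arbitrary: v)
  case 0
  then show ?case by (simp add: Xit_def x_init_def)
next
  case (Suc i)
  let ?S = "{ereal (real_of_int (\<omega> e)) + Xit VMin VT E \<omega> c i (tgt e) | e. e \<in> E \<and> src e = v}"
  have fS: "finite ?S" by (rule S_fin)
  have nS: "?S \<noteq> {}" using S_ne Suc.prems by auto
  have allS: "\<forall>s\<in>?S. s \<noteq> \<infinity>" using Suc.IH tgtV by auto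
  have m1: "Min ?S \<noteq> \<infinity>" using allS Min_in[OF fS nS] by blast
  have m2: "Max ?S \<noteq> \<infinity>" using allS Max_in[OF fS nS] by blast
  have eq: "Xit VMin VT E \<omega> c (Suc i) v = (if v \<in> VT then ereal (real_of_int (c v))
     else if v \<in> VMin then Min ?S else Max ?S)" unfolding Xit_Suc F_op_def by (rule refl)
  show ?case unfolding eq using m1 m2 by simp
qed

lemma X_mono1: "v \<in> V \<Longrightarrow> Xit VMin VT E \<omega> c i v \<le> Xit VMin VT E \<omega> c (Suc i) v"
proof (induction i arbitrary: v)
  case 0
  then show ?case
    by (cases "v \<in> VT") (simp_all add: X_VT, simp add: Xit_def x_init_def)
next
  case (Suc i)
  show ?case unfolding Xit_Suc[of _ _ _ _ _ "Suc i"]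
    apply (subst Xit_Suc)
    using Suc by (intro F_mono) auto
qed

lemma X_mono: assumes vV: "v \<in> V" and ij: "i \<le> j"
  shows "Xit VMin VT E \<omega> c i v \<le> Xit VMin VT E \<omega> c j v"
  using ij
proof (induction j rule: dec_induct)
  case base then show ?case by simp
next
  case (step j) then show ?case using X_mono1[OF vV, of j] by (meson order_trans)
qed


lemma key:
  assumes vV: "v \<in> V" and vT: "v \<notin> VT"
  shows "\<exists>e. e \<in> E \<and> src e = v \<and>
     Xit VMin VT E \<omega> c (Suc (Suc m)) v \<le> ereal (real_of_int (\<omega> e)) + Xit VMin VT E \<omega> c (Suc m) (tgt e) \<and>
     ereal (real_of_int (\<omega> e)) + Xit VMin VT E \<omega> c m (tgt e) \<le> Xit VMin VT E \<omega> c (Suc m) v"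
proof -
  define S where "S = (\<lambda>i. {ereal (real_of_int (\<omega> e)) + Xit VMin VT E \<omega> c i (tgt e) | e. e \<in> E \<and> src e = v})"
  have X: "Xit VMin VT E \<omega> c (Suc i) v = (if v \<in> VMin then Min (S i) else Max (S i))" for i
    using vT by (simp add: Xit_Suc F_op_def S_def)
  have fS: "finite (S i)" for i unfolding S_def by (rule S_fin)
  have nS: "S i \<noteq> {}" for i unfolding S_def using S_ne vV by auto
  show ?thesis
  proof (cases "v \<in> VMin")
    case True
    have "Min (S m) \<in> S m" using fS nS by (rule Min_in)
    then obtain e where e: "e \<in> E" "src e = v"
      "Min (S m) = ereal (real_of_int (\<omega> e)) + Xit VMin VT E \<omega> c m (tgt e)" unfolding S_def by auto
    have "Min (S (Suc m)) \<le> ereal (real_of_int (\<omega> e)) + Xit VMin VT E \<omega> c (Suc m) (tgt e)"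
      unfolding S_def using Min_le[OF fS[of "Suc m"], unfolded S_def, OF memS[OF e(1,2)]] .
    then show ?thesis using e X[of m] X[of "Suc m"] True by (intro exI[of _ e]) auto
  next
    case False
    have "Max (S (Suc m)) \<in> S (Suc m)" using fS nS by (rule Max_in)
    then obtain e where e: "e \<in> E" "src e = v"
      "Max (S (Suc m)) = ereal (real_of_int (\<omega> e)) + Xit VMin VT E \<omega> c (Suc m) (tgt e)" unfolding S_def by auto
    have "ereal (real_of_int (\<omega> e)) + Xit VMin VT E \<omega> c m (tgt e) \<le> Max (S m)"
      unfolding S_def using Max_ge[OF fS[of m], unfolded S_def, OF memS[OF e(1,2)]] .
    then show ?thesis using e X[of m] X[of "Suc m"] False by (intro exI[of _ e]) auto
  qed
qed

end


theorem proposition4: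
  fixes V VMin VMax VT :: "'v set" and A :: "'a set" and E :: "('v \<times> 'a \<times> 'v) set"
    and \<omega> :: "'v \<times> 'a \<times> 'v \<Rightarrow> int" and c :: "'v \<Rightarrow> int"
  assumes game: "weighted_game V VMin VMax VT A E"
    and sc: "strongly_connected_on E (V - VT)"
    and neg: "\<And>cyc. is_cycle E cyc \<Longrightarrow> cycle_vertices cyc \<subseteq> V - VT \<Longrightarrow> cycle_weight \<omega> cyc < 0"
    and fin_val: "\<And>v. v \<in> V \<Longrightarrow> game_value VMin VMax VT E \<omega> c v \<noteq> \<infinity> \<and>
                                   game_value VMin VMax VT E \<omega> c v \<noteq> -\<infinity>"
  shows "\<forall>k v. v \<in> V \<longrightarrow>
     ((F_op VMin VT E \<omega> c) ^^ (card (V - VT) + k)) (x_init VT c) v =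
     ((F_op VMin VT E \<omega> c) ^^ (card (V - VT))) (x_init VT c) v"
proof -
  define X where "X = Xit VMin VT E \<omega> c"
  have Xeq: "((F_op VMin VT E \<omega> c) ^^ i) (x_init VT c) = X i" for i by (simp add: X_def Xit_def)
  have XS: "X (Suc i) = F_op VMin VT E \<omega> c (X i)" for i by (simp add: X_def Xit_Suc)
  have Xfin: "u \<in> V \<Longrightarrow> X i u \<noteq> \<infinity>" for u i using X_fin[OF game] unfolding X_def by blast
  have XVT: "u \<in> VT \<Longrightarrow> X i u = ereal (real_of_int (c u))" for u i using X_VT[OF game] unfolding X_def by blast
  have Xmono1: "u \<in> V \<Longrightarrow> X i u \<le> X (Suc i) u" for u i using X_mono1[OF game] unfolding X_def by blast
  have Xmono: "u \<in> V \<Longrightarrow> i \<le> j \<Longrightarrow> X i u \<le> X j u" for u i j using X_mono[OF game] unfolding X_def by blast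
  define n where "n = card (V - VT)"
  have finV: "finite V" using game unfolding weighted_game_def by auto
  have stab: "X (Suc n) v = X n v" if vV: "v \<in> V" for v
  proof (rule ccontr)
    assume ne: "X (Suc n) v \<noteq> X n v"
    have inc0: "X n v < X (Suc n) v" using Xmono1[OF vV, of n] ne by auto
    define P where "P = (\<lambda>u m e. e \<in> E \<and> src e = u \<and>
       X (Suc (Suc m)) u \<le> ereal (real_of_int (\<omega> e)) + X (Suc m) (tgt e) \<and>
       ereal (real_of_int (\<omega> e)) + X m (tgt e) \<le> X (Suc m) u)"
    define ed where "ed = (\<lambda>u m. SOME e. P u m e)"
    have edP: "P u m (ed u m)" if "u \<in> V" "u \<notin> VT" for u m
    proof -
      have "\<exists>e. P u m e" using key[OF game that, where m=m] unfolding P_def X_def .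
      then show ?thesis unfolding ed_def by (rule someI_ex)
    qed
    define vs where "vs = (\<lambda>j. rec_nat v (\<lambda>j u. tgt (ed u (n - Suc j))) j)"
    have vs0: "vs 0 = v" and vsS: "vs (Suc j) = tgt (ed (vs j) (n - Suc j))" for j
      by (simp_all add: vs_def)
    have inv: "vs j \<in> V \<and> vs j \<notin> VT \<and> X (n - j) (vs j) < X (Suc (n - j)) (vs j)" if "j \<le> n" for j
      using that
    proof (induction j)
      case 0
      have "v \<notin> VT" using inc0 XVT by force
      then show ?case using vV inc0 vs0 by simp
    next
      case (Suc j)
      then have IH: "vs j \<in> V" "vs j \<notin> VT" "X (n-j) (vs j) < X (Suc (n-j)) (vs j)" by auto
      have nj: "n - j = Suc (n - Suc j)" using Suc.prems by simp
      let ?e = "ed (vs j) (n - Suc j)"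
      let ?w = "ereal (real_of_int (\<omega> ?e))"
      have P: "P (vs j) (n - Suc j) ?e" using edP IH by simp
      have A: "X (Suc (Suc (n - Suc j))) (vs j) \<le> ?w + X (Suc (n - Suc j)) (tgt ?e)"
        and B: "?w + X (n - Suc j) (tgt ?e) \<le> X (Suc (n - Suc j)) (vs j)" and eE: "?e \<in> E"
        using P unfolding P_def by auto
      have IH3: "X (Suc (n - Suc j)) (vs j) < X (Suc (Suc (n - Suc j))) (vs j)" using IH(3) nj by simp
      have lt: "?w + X (n - Suc j) (tgt ?e) < ?w + X (Suc (n - Suc j)) (tgt ?e)"
        using le_less_trans[OF B less_le_trans[OF IH3 A]] .
      have inc: "X (n - Suc j) (tgt ?e) < X (Suc (n - Suc j)) (tgt ?e)"
      proof (rule ccontr)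
        assume "\<not> ?thesis"
        then have "X (Suc (n - Suc j)) (tgt ?e) \<le> X (n - Suc j) (tgt ?e)" by simp
        then have "?w + X (Suc (n - Suc j)) (tgt ?e) \<le> ?w + X (n - Suc j) (tgt ?e)" by (rule add_left_mono)
        then show False using lt by simp
      qed
      have tV: "tgt ?e \<in> V" using tgtV[OF game eE] .
      have tT: "tgt ?e \<notin> VT" using inc XVT by force
      show ?case using inc tV tT vsS by simp
    qed
    have sub: "vs ` {0..n} \<subseteq> V - VT" using inv by auto
    have "\<not> inj_on vs {0..n}"
    proof
      assume "inj_on vs {0..n}"
      then have "card {0..n} \<le> card (V - VT)" using card_inj_on_le[OF _ sub] finV by auto
      then show False unfolding n_def by simp
    qed
    then obtain x y where xy: "x \<le> n" "y \<le> n" "x \<noteq> y" "vs x = vs y"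
      unfolding inj_on_def by auto
    obtain a b where ab: "a < b" "b \<le> n" "vs a = vs b"
    proof (cases "x < y")
      case True then show ?thesis using that xy by blast
    next
      case False then have "y < x" using xy by simp
      then show ?thesis using that[of y x] xy by simp
    qed
    define ed' where "ed' = (\<lambda>j. ed (vs j) (n - Suc j))"
    have edj: "ed' j \<in> E \<and> src (ed' j) = vs j \<and> tgt (ed' j) = vs (Suc j) \<and>
       X (Suc (n - j)) (vs j) \<le> ereal (real_of_int (\<omega> (ed' j))) + X (n - j) (vs (Suc j))"
      if "j < n" for j
    proof -
      have "P (vs j) (n - Suc j) (ed' j)" using edP inv[of j] that unfolding ed'_def by simp
      moreover have "n - j = Suc (n - Suc j)" using that by simp
      ultimately show ?thesis unfolding P_def ed'_def vsS by simp
    qed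
    define cyc where "cyc = map ed' [a..<b]"
    have cyc_ok: "is_cycle E cyc"
      unfolding is_cycle_def cyc_def
    proof (intro conjI allI impI)
      show "map ed' [a..<b] \<noteq> []" using ab by simp
      show "set (map ed' [a..<b]) \<subseteq> E" using edj ab by auto
      fix i assume "Suc i < length (map ed' [a..<b])"
      then have "a + Suc i < b" by simp
      then show "tgt (map ed' [a..<b] ! i) = src (map ed' [a..<b] ! Suc i)"
        using edj[of "a+i"] edj[of "a + Suc i"] ab by simp
    next
      have "last (map ed' [a..<b]) = ed' (b - 1)" using ab by (simp add: last_map)
      moreover have "hd (map ed' [a..<b]) = ed' a" using ab by (simp add: hd_map)
      moreover have "Suc (b - 1) = b" using ab by simp
      ultimately show "tgt (last (map ed' [a..<b])) = src (hd (map ed' [a..<b]))"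
      proof -
        have "tgt (ed' (b - 1)) = vs b" using edj[of "b - 1"] ab by simp
        moreover have "src (ed' a) = vs a" using edj[of a] ab by simp
        ultimately show ?thesis using \<open>last (map ed' [a..<b]) = ed' (b - 1)\<close> \<open>hd (map ed' [a..<b]) = ed' a\<close> ab by simp
      qed
    qed
    have cv: "cycle_vertices cyc \<subseteq> V - VT"
      unfolding cycle_vertices_def cyc_def
    proof
      fix u assume "u \<in> src ` set (map ed' [a..<b]) \<union> tgt ` set (map ed' [a..<b])"
      then obtain j where j: "a \<le> j" "j < b" "u = vs j \<or> u = vs (Suc j)" using edj ab by auto
      then show "u \<in> V - VT" using inv[of j] inv[of "Suc j"] ab by auto
    qed
    define W where "W = (\<Sum>k\<in>{a..<b}. \<omega> (ed' k))"
    have W: "W < 0" using neg[OF cyc_ok cv] unfolding W_def cycle_weight_def cyc_def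
      by (simp add: interv_sum_list_conv_sum_set_nat comp_def)
    have tele: "X (Suc (n - a)) (vs a) \<le> ereal (real_of_int (\<Sum>k\<in>{a..<j}. \<omega> (ed' k))) + X (Suc (n - j)) (vs j)"
      if "a \<le> j" "j \<le> b" for j
      using that
    proof (induction j)
      case 0 then show ?case by simp
    next
      case (Suc j)
      show ?case
      proof (cases "a = Suc j")
        case True then show ?thesis by simp
      next
        case False
        then have aj: "a \<le> j" "j < n" using Suc.prems ab by auto
        let ?S = "ereal (real_of_int (\<Sum>k\<in>{a..<j}. \<omega> (ed' k)))"
        let ?w = "ereal (real_of_int (\<omega> (ed' j)))"
        have "X (Suc (n - a)) (vs a) \<le> ?S + X (Suc (n - j)) (vs j)" using Suc aj by simp
        also have "\<dots> \<le> ?S + (?w + X (n - j) (vs (Suc j)))"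
          using edj[OF aj(2)] by (intro add_left_mono) simp
        also have "\<dots> = (?S + ?w) + X (Suc (n - Suc j)) (vs (Suc j))"
        proof -
          have "Suc (n - Suc j) = n - j" using aj by simp
          then show ?thesis by (simp only: add.assoc)
        qed
        also have "?S + ?w = ereal (real_of_int (\<Sum>k\<in>{a..<Suc j}. \<omega> (ed' k)))"
          using aj by simp
        finally show ?thesis .
      qed
    qed
    have va: "vs a \<in> V" using inv[of a] ab by simp
    have aleb: "a \<le> b" "b \<le> b" using ab by auto
    have t1: "X (Suc (n - a)) (vs a) \<le> ereal (real_of_int W) + X (Suc (n - b)) (vs b)"
      using tele[OF aleb] unfolding W_def .
    have m1: "X (Suc (n - b)) (vs b) \<le> X (Suc (n - a)) (vs a)"
    proof -
      have "Suc (n - b) \<le> Suc (n - a)" using ab by simp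
      from Xmono[OF va this] show ?thesis using ab(3) by simp
    qed
    have le: "X (Suc (n - a)) (vs a) \<le> ereal (real_of_int W) + X (Suc (n - a)) (vs a)"
      using order_trans[OF t1 add_left_mono[OF m1]] .
    have f1: "X (Suc (n - a)) (vs a) \<noteq> \<infinity>" using Xfin va by blast
    have "a \<le> n" using ab by simp
    then have lt: "X (n - a) (vs a) < X (Suc (n - a)) (vs a)" using inv[of a] by blast
    have f2: "X (Suc (n - a)) (vs a) \<noteq> -\<infinity>"
    proof
      assume "X (Suc (n - a)) (vs a) = -\<infinity>"
      with lt show False by simp
    qed
    obtain r where r: "X (Suc (n - a)) (vs a) = ereal r"
      using f1 f2 by (cases "X (Suc (n - a)) (vs a)") auto
    from le have "ereal r \<le> ereal (real_of_int W) + ereal r" unfolding r .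
    then have "r \<le> real_of_int W + r" by simp
    then show False using W by simp
  qed
  have all: "\<forall>v\<in>V. X (n + k) v = X n v" for k
  proof (induction k)
    case 0 show ?case by simp
  next
    case (Suc k)
    show ?case
    proof
      fix v assume vV: "v \<in> V"
      have "X (n + Suc k) v = F_op VMin VT E \<omega> c (X (n + k)) v" by (simp add: XS)
      also have "\<dots> = F_op VMin VT E \<omega> c (X n) v" using F_cong[OF game] Suc.IH by blast
      also have "\<dots> = X (Suc n) v" by (simp add: XS)
      also have "\<dots> = X n v" using stab vV by simp
      finally show "X (n + Suc k) v = X n v" .
    qed
  qed
  show ?thesis unfolding Xeq n_def[symmetric] using all by blast
qed

end
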